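(* Fix $n\ge1$. The map $\Psi\colon\mathrm{MAD}(c^\times)\to\overline{\mathcal{M}}_{n+1}$ is a bijection.
   Context: Place points $1,\ldots,n+1$ left to right on a horizontal line. An arc is a curve from a point $i$ to a point $j>i$ moving monotonically rightward and passing above or below each of $i+1,\ldots,j-1$; arcs are identified if they have the same endpoints and pass above the same points. A noncrossing arc diagram is a set of arcs that can be drawn so that no two share a left endpoint, no two share a right endpoint, and no two cross in their interiors. An arc from $i$ to $j$ is $c^\times$-sortable if, for each $k$ with $i<k<j$, it passes above $k$ when $k$ is odd and below $k$ when $k$ is even. $\mathrm{MAD}(c^\times)$ is the set of noncrossing arc diagrams consisting of $c^\times$-sortable arcs that are maximal under inclusion among such diagrams. For $\delta\in\mathrm{MAD}(c^\times)$, $\Psi(\delta)=\mathtt{M}_1\cdots\mathtt{M}_{n+1}$ where $\mathtt{M}_i=\mathtt{U}$ if $i\le n$ and $i+1$ is not the right endpoint of an arc of $\delta$; $\mathtt{M}_i=\mathtt{D}$ if $i\ge2$ and $i-1$ is not the left endpoint of an arc of $\delta$; and $\mathtt{M}_i=\mathtt{H}$ otherwise. A Motzkin path of length $m$ is a word in $\mathtt{U},\mathtt{D},\mathtt{H}$ of length $m$ with equally many $\mathtt{U}$'s and $\mathtt{D}$'s and every prefix having at least as many $\mathtt{U}$'s as $\mathtt{D}$'s. A peak is a consecutive $\mathtt{U}\mathtt{D}$; its height is $\#_\mathtt{U}(P)-\#_\mathtt{D}(P)$ for $P$ the prefix ending with that $\mathtt{U}$. $\overline{\mathcal{M}}_m$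 is the set of Motzkin paths of length $m$ with no peak of height $1$. (It is known that $\Psi(\delta)\in\overline{\mathcal{M}}_{n+1}$ for every $\delta\in\mathrm{MAD}(c^\times)$.) *)

theory Defs
  imports Main
begin

text \<open>An arc on the points 1..N is a triple (i, j, A): left endpoint i, right endpoint j,
  and A = the set of interior points k (i < k < j) that the arc passes ABOVE
  (it passes below the remaining interior points).\<close>
type_synonym arc = "nat \<times> nat \<times> nat set"

definition left_end :: "arc \<Rightarrow> nat" where "left_end a = fst a"
definition right_end :: "arc \<Rightarrow> nat" where "right_end a = fst (snd a)"
definition above_set :: "arc \<Rightarrow> nat set" where "above_set a = snd (snd a)"

definition is_arc :: "nat \<Rightarrow> arc \<Rightarrow> bool" where
  "is_arc N a \<longleftrightarrow> 1 \<le> left_end a \<and> left_end a < right_end a \<and> right_end a \<le> N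
     \<and> above_set a \<subseteq> {left_end a<..<right_end a}"

definition pos :: "arc \<Rightarrow> nat \<Rightarrow> int" where
  "pos a k = (if k = left_end a \<or> k = right_end a then 0
              else if k \<in> above_set a then 1 else -1)"

text \<open>Two arcs cross (cannot be drawn without an interior crossing) iff on the common closed
  interval of their endpoints one is strictly above the other at some point and strictly
  below it at another point.\<close>
definition arcs_cross :: "arc \<Rightarrow> arc \<Rightarrow> bool" where
  "arcs_cross a b \<longleftrightarrow>
    (\<exists>k \<in> {max (left_end a) (left_end b) .. min (right_end a) (right_end b)}.
     \<exists>k' \<in> {max (left_end a) (left_end b) .. min (right_end a) (right_end b)}.
       pos a k > pos b k \<and> pos a k' < pos b k')"

definition noncrossing_diagram :: "nat \<Rightarrow> arc set \<Rightarrow> bool" where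
  "noncrossing_diagram N \<delta> \<longleftrightarrow>
     (\<forall>a \<in> \<delta>. is_arc N a) \<and>
     (\<forall>a \<in> \<delta>. \<forall>b \<in> \<delta>. a \<noteq> b \<longrightarrow>
        left_end a \<noteq> left_end b \<and> right_end a \<noteq> right_end b \<and> \<not> arcs_cross a b)"

definition sortable :: "arc \<Rightarrow> bool" where
  "sortable a \<longleftrightarrow> above_set a = {k \<in> {left_end a<..<right_end a}. odd k}"

definition MAD :: "nat \<Rightarrow> arc set set" where
  "MAD n = {\<delta>. noncrossing_diagram (n+1) \<delta> \<and> (\<forall>a \<in> \<delta>. sortable a) \<and>
     (\<forall>\<delta>'. noncrossing_diagram (n+1) \<delta>' \<and> (\<forall>a \<in> \<delta>'. sortable a) \<and> \<delta> \<subseteq> \<delta>' \<longrightarrow> \<delta>' = \<delta>)}"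

datatype step = U | D | H

definition Psi :: "nat \<Rightarrow> arc set \<Rightarrow> step list" where
  "Psi n \<delta> = map (\<lambda>i.
      if i \<le> n \<and> (i+1) \<notin> right_end ` \<delta> then U
      else if 2 \<le> i \<and> (i-1) \<notin> left_end ` \<delta> then D
      else H) [1..<n+2]"

definition cnt :: "step \<Rightarrow> step list \<Rightarrow> int" where
  "cnt s w = int (length (filter (\<lambda>x. x = s) w))"

definition motzkin :: "nat \<Rightarrow> step list \<Rightarrow> bool" where
  "motzkin m w \<longleftrightarrow> length w = m \<and> cnt U w = cnt D w \<and>
     (\<forall>p \<le> length w. cnt U (take p w) \<ge> cnt D (take p w))"

definition has_peak_height :: "int \<Rightarrow> step list \<Rightarrow> bool" where
  "has_peak_height h w \<longleftrightarrow> (\<exists>p. p + 1 < length w \<and> w ! p = U \<and> w ! (p+1) = D \<and>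
     cnt U (take (p+1) w) - cnt D (take (p+1) w) = h)"

definition Mbar :: "nat \<Rightarrow> step list set" where
  "Mbar m = {w. motzkin m w \<and> \<not> has_peak_height 1 w}"

end

theory Submission
  imports Defs
begin

definition ao :: "nat \<Rightarrow> nat \<Rightarrow> arc" where
  "ao i j = (i, j, {k \<in> {i<..<j}. odd k})"

lemma ao_simps[simp]: "left_end (ao i j) = i" "right_end (ao i j) = j"
  "above_set (ao i j) = {k \<in> {i<..<j}. odd k}"
  by (auto simp: ao_def left_end_def right_end_def above_set_def)

lemma ao_inj[simp]: "ao i j = ao k l \<longleftrightarrow> i = k \<and> j = l"
  by (auto simp: ao_def)

lemma pos_ao: "pos (ao i j) x = (if x = i \<or> x = j then 0 else if i < x \<and> x < j \<and> odd x then 1 else -1)"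
  by (auto simp: pos_def)

lemma cross_sym: "arcs_cross a b \<longleftrightarrow> arcs_cross b a"
  unfolding arcs_cross_def by (auto simp: max.commute min.commute)

lemma C1:
  assumes "i < k" "k < j" "j < l"
  shows "arcs_cross (ao i j) (ao k l) \<longleftrightarrow> even (k + j)"
proof
  assume c: "arcs_cross (ao i j) (ao k l)"
  then obtain x y where x: "x \<in> {k..j}" and y: "y \<in> {k..j}"
    and xy: "pos (ao i j) x > pos (ao k l) x" "pos (ao i j) y < pos (ao k l) y"
    using assms unfolding arcs_cross_def by (auto simp: max_def min_def)
  show "even (k+j)"
  proof (rule ccontr)
    assume "\<not> even (k+j)"
    then consider "odd k" "even j" | "even k" "odd j" by auto
    then show False
    proof cases
      case 1
      then show False using y xy(2) assms by (auto simp: pos_ao split: if_splits)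
    next
      case 2
      then show False using x xy(1) assms by (auto simp: pos_ao split: if_splits)
    qed
  qed
next
  assume e: "even (k+j)"
  show "arcs_cross (ao i j) (ao k l)"
  proof (cases "odd k")
    case True
    then have "odd j" using e by auto
    then show ?thesis unfolding arcs_cross_def using assms True
      by (auto simp: pos_ao max_def min_def intro!: bexI[of _ k] bexI[of _ j])
  next
    case False
    then have "even j" using e by auto
    then show ?thesis unfolding arcs_cross_def using assms False
      apply - apply (rule bexI[of _ j]) apply (rule bexI[of _ k])
      by (auto simp: pos_ao max_def min_def)
  qed
qed

lemma C2:
  assumes "i < k" "k < l" "l < j"
  shows "arcs_cross (ao i j) (ao k l) \<longleftrightarrow> odd (k + l)"
proof
  assume c: "arcs_cross (ao i j) (ao k l)"
  then obtain x y where x: "x \<in> {k..l}" and y: "y \<in> {k..l}"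
    and xy: "pos (ao i j) x > pos (ao k l) x" "pos (ao i j) y < pos (ao k l) y"
    using assms unfolding arcs_cross_def by (auto simp: max_def min_def)
  show "odd (k+l)"
  proof (rule ccontr)
    assume "\<not> odd (k+l)"
    then consider "odd k" "odd l" | "even k" "even l" by auto
    then show False
    proof cases
      case 1
      then show False using y xy(2) assms by (auto simp: pos_ao split: if_splits)
    next
      case 2
      then show False using x xy(1) assms by (auto simp: pos_ao split: if_splits)
    qed
  qed
next
  assume e: "odd (k+l)"
  show "arcs_cross (ao i j) (ao k l)"
  proof (cases "odd k")
    case True
    then have "even l" using e by auto
    then show ?thesis unfolding arcs_cross_def using assms True
      apply - apply (rule bexI[of _ k]) apply (rule bexI[of _ l])
      by (auto simp: pos_ao max_def min_def)
  next
    case False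
    then have "odd l" using e by auto
    then show ?thesis unfolding arcs_cross_def using assms False
      apply - apply (rule bexI[of _ l]) apply (rule bexI[of _ k])
      by (auto simp: pos_ao max_def min_def)
  qed
qed

lemma C3:
  assumes "i < j" "j \<le> k" "k < l"
  shows "\<not> arcs_cross (ao i j) (ao k l)"
  using assms unfolding arcs_cross_def by (auto simp: pos_ao max_def min_def)

definition ND :: "nat \<Rightarrow> arc set \<Rightarrow> bool" where
  "ND N \<delta> \<longleftrightarrow> noncrossing_diagram N \<delta> \<and> (\<forall>a \<in> \<delta>. sortable a)"

lemma MAD_iff: "\<delta> \<in> MAD n \<longleftrightarrow> ND (n+1) \<delta> \<and> (\<forall>\<delta>'. ND (n+1) \<delta>' \<and> \<delta> \<subseteq> \<delta>' \<longrightarrow> \<delta>' = \<delta>)"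
  unfolding MAD_def ND_def by auto

lemma sortable_ao: "sortable a \<Longrightarrow> a = ao (left_end a) (right_end a)"
  by (cases a) (auto simp: sortable_def ao_def left_end_def right_end_def above_set_def)

lemma sortable_ao2[simp]: "sortable (ao i j)"
  by (simp add: sortable_def)

lemma is_arc_ao[simp]: "is_arc N (ao i j) \<longleftrightarrow> 1 \<le> i \<and> i < j \<and> j \<le> N"
  by (auto simp: is_arc_def)

lemma ND_ao: "ND N \<delta> \<Longrightarrow> a \<in> \<delta> \<Longrightarrow> a = ao (left_end a) (right_end a)"
  using sortable_ao unfolding ND_def by blast

lemma ND_arc: "ND N \<delta> \<Longrightarrow> a \<in> \<delta> \<Longrightarrow> 1 \<le> left_end a \<and> left_end a < right_end a \<and> right_end a \<le> N"
  unfolding ND_def noncrossing_diagram_def is_arc_def by blast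

lemma ND_pair: "ND N \<delta> \<Longrightarrow> a \<in> \<delta> \<Longrightarrow> b \<in> \<delta> \<Longrightarrow> a \<noteq> b \<Longrightarrow>
   left_end a \<noteq> left_end b \<and> right_end a \<noteq> right_end b \<and> \<not> arcs_cross a b"
  unfolding ND_def noncrossing_diagram_def by blast

lemma ND_finite: assumes "ND N \<delta>" shows "finite \<delta>"
proof -
  have "\<delta> \<subseteq> (\<lambda>(i,j). ao i j) ` ({0..N} \<times> {0..N})"
  proof
    fix a assume "a \<in> \<delta>"
    then have "a = ao (left_end a) (right_end a)" "left_end a \<le> N" "right_end a \<le> N"
      using ND_ao[OF assms] ND_arc[OF assms] by (blast, fastforce, blast)
    then show "a \<in> (\<lambda>(i,j). ao i j) ` ({0..N} \<times> {0..N})"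
      by (intro image_eqI[of _ _ "(left_end a, right_end a)"]) auto
  qed
  then show ?thesis by (rule finite_subset) auto
qed

lemma ND_insert:
  assumes "ND N \<delta>" "1 \<le> i" "i < j" "j \<le> N"
    and "\<And>a. a \<in> \<delta> \<Longrightarrow> left_end a \<noteq> i \<and> right_end a \<noteq> j \<and> \<not> arcs_cross a (ao i j)"
  shows "ND N (insert (ao i j) \<delta>)"
proof -
  have "\<And>a. a \<in> \<delta> \<Longrightarrow> \<not> arcs_cross (ao i j) a"
    using assms(5) cross_sym by blast
  then show ?thesis
    using assms unfolding ND_def noncrossing_diagram_def
    by (smt (verit, best) ao_simps(1,2) insert_iff is_arc_ao sortable_ao2)
qed

lemma cross_pair:
  assumes "i < j" "k < l" "i < k" "j \<noteq> l"
  shows "arcs_cross (ao i j) (ao k l) \<longleftrightarrow> (k < j \<and> j < l \<and> even (k+j)) \<or> (l < j \<and> odd (k+l))"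
proof -
  consider "j \<le> k" | "k < j" "j < l" | "l < j" using assms by linarith
  then show ?thesis
  proof cases
    case 1 then show ?thesis using C3[of i j k l] assms by auto
  next
    case 2 then show ?thesis using C1[of i k j l] assms by auto
  next
    case 3 then show ?thesis using C2[of i k l j] assms by auto
  qed
qed

lemma MAD_h1:
  assumes "\<delta> \<in> MAD n" "1 \<le> a" "a + 2 \<le> n + 1"
  shows "a \<in> left_end ` \<delta> \<or> a + 2 \<in> right_end ` \<delta>"
proof (rule ccontr)
  assume na: "\<not> ?thesis"
  have nd: "ND (n+1) \<delta>" using assms(1) MAD_iff by blast
  have "ND (n+1) (insert (ao a (a+2)) \<delta>)"
  proof (rule ND_insert[OF nd assms(2) _ assms(3)])
    fix c assume c: "c \<in> \<delta>"
    define k where "k = left_end c"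
    define l where "l = right_end c"
    have ceq: "c = ao k l" using ND_ao[OF nd c] k_def l_def by simp
    have kl: "1 \<le> k" "k < l" "l \<le> n+1" using ND_arc[OF nd c] k_def l_def by auto
    have cLR: "k \<in> left_end ` \<delta>" "l \<in> right_end ` \<delta>" using c unfolding k_def l_def by auto
    have ka: "k \<noteq> a" "l \<noteq> a + 2"
    proof -
      show "k \<noteq> a" proof assume "k = a" then have "a \<in> left_end ` \<delta>" using cLR by simp
        with na show False by blast qed
      show "l \<noteq> a + 2" proof assume "l = a + 2" then have "a + 2 \<in> right_end ` \<delta>" using cLR by simp
        with na show False by blast qed
    qed
    have "\<not> arcs_cross (ao k l) (ao a (a+2))"
    proof (cases "k < a")
      case True
      consider "l \<le> a" | "l = a + 1" | "a + 2 < l" using ka by linarith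
      then show ?thesis
      proof cases
        case 1 then show ?thesis using C3[of k l a "a+2"] kl True by auto
      next
        case 2 then show ?thesis using C1[of k a l "a+2"] kl True by auto
      next
        case 3 then show ?thesis using C2[of k a "a+2" l] kl True by auto
      qed
    next
      case False
      then have "a < k" using ka by auto
      consider "k = a + 1" | "a + 2 \<le> k" using \<open>a < k\<close> by linarith
      then show ?thesis
      proof cases
        case 1 then have "\<not> arcs_cross (ao a (a+2)) (ao k l)" using C1[of a k "a+2" l] kl ka by auto
          then show ?thesis using cross_sym by blast
      next
        case 2 then have "\<not> arcs_cross (ao a (a+2)) (ao k l)" using C3[of a "a+2" k l] kl by auto
          then show ?thesis using cross_sym by blast
      qed
    qed
    then show "left_end c \<noteq> a \<and> right_end c \<noteq> a + 2 \<and> \<not> arcs_cross c (ao a (a + 2))"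
      using ka by (simp add: ceq)
  qed simp
  then have "insert (ao a (a+2)) \<delta> = \<delta>" using assms(1) MAD_iff by blast
  then have "ao a (a+2) \<in> \<delta>" by blast
  then have "a \<in> left_end ` \<delta>" using imageI[of "ao a (a+2)" \<delta> left_end] by simp
  then show False using na by blast
qed

lemma MAD_h2:
  assumes "\<delta> \<in> MAD n" "1 \<le> a" "a + 1 \<le> n + 1"
  shows "a \<in> left_end ` \<delta> \<or> a + 1 \<in> right_end ` \<delta> \<or> (\<exists>b\<in>\<delta>. left_end b < a \<and> a + 1 < right_end b)"
proof (rule ccontr)
  assume na: "\<not> ?thesis"
  have nd: "ND (n+1) \<delta>" using assms(1) MAD_iff by blast
  have "ND (n+1) (insert (ao a (a+1)) \<delta>)"
  proof (rule ND_insert[OF nd assms(2) _ assms(3)])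
    fix c assume c: "c \<in> \<delta>"
    define k where "k = left_end c"
    define l where "l = right_end c"
    have ceq: "c = ao k l" using ND_ao[OF nd c] k_def l_def by simp
    have kl: "1 \<le> k" "k < l" "l \<le> n+1" using ND_arc[OF nd c] k_def l_def by auto
    have cLR: "k \<in> left_end ` \<delta>" "l \<in> right_end ` \<delta>" using c unfolding k_def l_def by auto
    have ka: "k \<noteq> a" "l \<noteq> a + 1"
    proof -
      show "k \<noteq> a" proof assume "k = a" then have "a \<in> left_end ` \<delta>" using cLR by simp
        with na show False by blast qed
      show "l \<noteq> a + 1" proof assume "l = a + 1" then have "a + 1 \<in> right_end ` \<delta>" using cLR by simp
        with na show False by blast qed
    qed
    have ka3: "\<not> (k < a \<and> a + 1 < l)" using na c unfolding k_def l_def by blast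
    have "\<not> arcs_cross (ao k l) (ao a (a+1))"
    proof (cases "k < a")
      case True
      then show ?thesis using cross_pair[of k l a "a+1"] kl ka ka3 by auto
    next
      case False
      then have "a < k" using ka by auto
      then show ?thesis using cross_pair[of a "a+1" k l] kl ka cross_sym[of "ao k l" "ao a (a+1)"] by auto
    qed
    then show "left_end c \<noteq> a \<and> right_end c \<noteq> a + 1 \<and> \<not> arcs_cross c (ao a (a + 1))"
      using ka by (simp add: ceq)
  qed simp
  then have "insert (ao a (a+1)) \<delta> = \<delta>" using assms(1) MAD_iff by blast
  then have "ao a (a+1) \<in> \<delta>" by blast
  then have "a \<in> left_end ` \<delta>" using imageI[of "ao a (a+1)" \<delta> left_end] by simp
  then show False using na by blast
qed

lemma MAD_suff:
  assumes nd: "ND (n+1) \<delta>"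
    and h1: "\<And>a. 1 \<le> a \<Longrightarrow> a + 2 \<le> n + 1 \<Longrightarrow> a \<in> left_end ` \<delta> \<or> a + 2 \<in> right_end ` \<delta>"
    and h2: "\<And>a. 1 \<le> a \<Longrightarrow> a + 1 \<le> n + 1 \<Longrightarrow>
       a \<in> left_end ` \<delta> \<or> a + 1 \<in> right_end ` \<delta> \<or> (\<exists>b\<in>\<delta>. left_end b < a \<and> a + 1 < right_end b)"
  shows "\<delta> \<in> MAD n"
  unfolding MAD_iff
proof (intro conjI allI impI nd)
  fix \<delta>' assume a: "ND (n + 1) \<delta>' \<and> \<delta> \<subseteq> \<delta>'"
  then have nd': "ND (n+1) \<delta>'" and sub: "\<delta> \<subseteq> \<delta>'" by auto
  show "\<delta>' = \<delta>"
  proof (rule ccontr)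
    assume "\<delta>' \<noteq> \<delta>"
    then obtain b where b: "b \<in> \<delta>'" "b \<notin> \<delta>" using sub by blast
    define x where "x = left_end b"
    define y where "y = right_end b"
    have beq: "b = ao x y" using ND_ao[OF nd' b(1)] x_def y_def by simp
    have xy: "1 \<le> x" "x < y" "y \<le> n+1" using ND_arc[OF nd' b(1)] x_def y_def by auto
    have xL: "x \<notin> left_end ` \<delta>"
    proof
      assume "x \<in> left_end ` \<delta>"
      then obtain c where "c \<in> \<delta>" "left_end c = x" by auto
      then show False using ND_pair[OF nd' b(1), of c] sub b x_def by auto
    qed
    have yR: "y \<notin> right_end ` \<delta>"
    proof
      assume "y \<in> right_end ` \<delta>"
      then obtain c where "c \<in> \<delta>" "right_end c = y" by auto
      then show False using ND_pair[OF nd' b(1), of c] sub b y_def by auto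
    qed
    consider "y = x + 1" | "y = x + 2" | "x + 2 < y" using xy by linarith
    then show False
    proof cases
      case 1
      then obtain c where c: "c \<in> \<delta>" "left_end c < x" "x + 1 < right_end c"
        using h2[of x] xy xL yR by auto
      have ceq: "c = ao (left_end c) (right_end c)" using ND_ao[OF nd c(1)] .
      have "arcs_cross (ao (left_end c) (right_end c)) (ao x y)"
        using cross_pair[of "left_end c" "right_end c" x y] c 1 xy by auto
      then have "arcs_cross c b" using beq ceq by simp
      then show False using ND_pair[OF nd' _ b(1), of c] sub c b by auto
    next
      case 2
      then show False using h1[of x] xy xL yR by auto
    next
      case 3
      then obtain c where c: "c \<in> \<delta>" "right_end c = x + 2"
        using h1[of x] xy xL by auto
      have ceq: "c = ao (left_end c) (right_end c)" using ND_ao[OF nd c(1)] .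
      have cl: "left_end c < x + 2" "left_end c \<noteq> x" using ND_arc[OF nd c(1)] c xL by auto
      have "arcs_cross c b"
      proof (cases "left_end c < x")
        case True
        then show ?thesis using cross_pair[of "left_end c" "right_end c" x y] c 3 xy beq ceq by auto
      next
        case False
        then have "left_end c = x + 1" using cl by auto
        then have "arcs_cross b c"
          using cross_pair[of x y "left_end c" "right_end c"] c 3 xy beq ceq by auto
        then show ?thesis using cross_sym[of b c] by blast
      qed
      then show False using ND_pair[OF nd' _ b(1), of c] sub c b by auto
    qed
  qed
qed



definition gstep :: "nat \<Rightarrow> nat set \<Rightarrow> nat set \<Rightarrow> nat \<Rightarrow> step" where
  "gstep n L R i = (if i \<le> n \<and> i+1 \<notin> R then U else if 2 \<le> i \<and> i-1 \<notin> L then D else H)"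

lemma Psi_LR: "Psi n \<delta> = map (gstep n (left_end ` \<delta>) (right_end ` \<delta>)) [1..<n+2]"
  by (simp add: Psi_def gstep_def)

fun sv :: "step \<Rightarrow> int" where "sv U = 1" | "sv D = -1" | "sv H = 0"

definition ind :: "nat set \<Rightarrow> nat \<Rightarrow> int" where "ind A p = (if p \<in> A then 1 else 0)"

lemma cnt_upt: "cnt U (map f [1..<p+1]) - cnt D (map f [1..<p+1]) = (\<Sum>i=1..p. sv (f i))"
proof (induction p)
  case 0 then show ?case by (simp add: cnt_def)
next
  case (Suc p)
  have e: "[1..<Suc p + 1] = [1..<p+1] @ [Suc p]" by simp
  show ?case unfolding e using Suc by (cases "f (Suc p)") (auto simp: cnt_def)
qed

lemma take_map_upt: "p \<le> n + 1 \<Longrightarrow> take p (map f [1..<n+2]) = map f [1..<p+1]"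
proof -
  assume "p \<le> n + 1"
  then have "take p [1..<n+2] = [1..<1+p]" by (intro take_upt) simp
  then show ?thesis by (simp only: take_map add.commute)
qed

lemma ht_eq: "p \<le> n + 1 \<Longrightarrow>
  cnt U (take p (map f [1..<n+2])) - cnt D (take p (map f [1..<n+2])) = (\<Sum>i=1..p. sv (f i))"
  using take_map_upt cnt_upt by metis

lemma nth_w: "q < n + 1 \<Longrightarrow> map g [1..<n+2] ! q = g (q+1)"
  by (simp only: nth_map length_upt) (auto simp: nth_upt simp del: upt_Suc)

lemma sum_ind: "finite A \<Longrightarrow> (\<Sum>p\<in>A. ind L p) = int (card (A \<inter> L))"
  by (simp add: ind_def sum.If_cases)

lemma G:
  assumes R1: "1 \<notin> R"
    and h1: "\<And>a. 1 \<le> a \<Longrightarrow> a + 2 \<le> n + 1 \<Longrightarrow> a \<in> L \<or> a + 2 \<in> R"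
  shows "1 \<le> i \<Longrightarrow> i \<le> n \<Longrightarrow>
     (\<Sum>t=1..i. sv (gstep n L R t)) = 1 + (\<Sum>p=1..i-1. ind L p) - (\<Sum>p=1..i+1. ind R p)"
proof (induction i)
  case 0 then show ?case by simp
next
  case (Suc i)
  show ?case
  proof (cases "i = 0")
    case True
    then show ?thesis using Suc.prems R1 by (auto simp: gstep_def ind_def)
  next
    case False
    then have IH: "(\<Sum>t=1..i. sv (gstep n L R t)) = 1 + (\<Sum>p=1..i-1. ind L p) - (\<Sum>p=1..i+1. ind R p)"
      using Suc by auto
    have st: "sv (gstep n L R (Suc i)) = ind L i - ind R (i+2)"
      using h1[of i] False Suc.prems by (auto simp: gstep_def ind_def)
    have s1: "(\<Sum>t=1..Suc i. sv (gstep n L R t)) = (\<Sum>t=1..i. sv (gstep n L R t)) + sv (gstep n L R (Suc i))"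
      by simp
    have s2: "(\<Sum>p=1..Suc i - 1. ind L p) = (\<Sum>p=1..i-1. ind L p) + ind L i"
      using False by (cases i) auto
    have s3: "(\<Sum>p=1..Suc i + 1. ind R p) = (\<Sum>p=1..i+1. ind R p) + ind R (i+2)"
      by simp
    show ?thesis using IH st s1 s2 s3 by simp
  qed
qed

lemma Gtot:
  assumes R1: "1 \<notin> R" and n1: "1 \<le> n"
    and h1: "\<And>a. 1 \<le> a \<Longrightarrow> a + 2 \<le> n + 1 \<Longrightarrow> a \<in> L \<or> a + 2 \<in> R"
  shows "(\<Sum>t=1..n+1. sv (gstep n L R t)) = (\<Sum>p=1..n. ind L p) - (\<Sum>p=1..n+1. ind R p)"
proof -
  have a: "(\<Sum>t=1..n. sv (gstep n L R t)) = 1 + (\<Sum>p=1..n-1. ind L p) - (\<Sum>p=1..n+1. ind R p)"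
    using G[OF R1 h1, of n] n1 by auto
  have b: "sv (gstep n L R (n+1)) = ind L n - 1"
    using n1 by (auto simp: gstep_def ind_def)
  have c: "(\<Sum>p=1..n. ind L p) = (\<Sum>p=1..n-1. ind L p) + ind L n"
    using n1 by (cases n) auto
  show ?thesis using a b c by simp
qed

lemma ND_injL: "ND N \<delta> \<Longrightarrow> inj_on left_end \<delta>"
  unfolding inj_on_def using ND_pair by metis
lemma ND_injR: "ND N \<delta> \<Longrightarrow> inj_on right_end \<delta>"
  unfolding inj_on_def using ND_pair by metis

lemma card_left: assumes "ND N \<delta>"
  shows "card {a\<in>\<delta>. left_end a \<le> m} = card ({1..m} \<inter> left_end ` \<delta>)"
proof -
  have "\<forall>a\<in>\<delta>. 1 \<le> left_end a" using ND_arc[OF assms] by blast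
  then have "left_end ` {a\<in>\<delta>. left_end a \<le> m} = {1..m} \<inter> left_end ` \<delta>"
    by auto
  moreover have "inj_on left_end {a\<in>\<delta>. left_end a \<le> m}"
    using ND_injL[OF assms] by (rule inj_on_subset) auto
  ultimately show ?thesis using card_image[of left_end "{a\<in>\<delta>. left_end a \<le> m}"] by simp
qed

lemma card_right: assumes "ND N \<delta>"
  shows "card {a\<in>\<delta>. right_end a \<le> m} = card ({1..m} \<inter> right_end ` \<delta>)"
proof -
  have "\<forall>a\<in>\<delta>. 1 \<le> right_end a" using ND_arc[OF assms] by fastforce
  then have "right_end ` {a\<in>\<delta>. right_end a \<le> m} = {1..m} \<inter> right_end ` \<delta>"
    by auto
  moreover have "inj_on right_end {a\<in>\<delta>. right_end a \<le> m}"
    using ND_injR[OF assms] by (rule inj_on_subset) auto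
  ultimately show ?thesis using card_image[of right_end "{a\<in>\<delta>. right_end a \<le> m}"] by simp
qed

lemma B1:
  assumes mad: "\<delta> \<in> MAD n" and n1: "1 \<le> n"
  shows "Psi n \<delta> \<in> Mbar (n+1)"
proof -
  define L where "L = left_end ` \<delta>"
  define R where "R = right_end ` \<delta>"
  define g where "g = gstep n L R"
  have w: "Psi n \<delta> = map g [1..<n+2]" unfolding g_def L_def R_def by (rule Psi_LR)
  have nd: "ND (n+1) \<delta>" using mad MAD_iff by blast
  have fin: "finite \<delta>" using ND_finite[OF nd] .
  have R1: "1 \<notin> R" unfolding R_def using ND_arc[OF nd] by force
  have Lsub: "L \<subseteq> {1..n}" unfolding L_def using ND_arc[OF nd] by force
  have Rsub: "R \<subseteq> {1..n+1}" unfolding R_def using ND_arc[OF nd] by force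
  have h1: "\<And>a. 1 \<le> a \<Longrightarrow> a + 2 \<le> n + 1 \<Longrightarrow> a \<in> L \<or> a + 2 \<in> R"
    using MAD_h1[OF mad] unfolding L_def R_def by blast
  have cLR: "card L = card R"
    unfolding L_def R_def using card_image[OF ND_injL[OF nd]] card_image[OF ND_injR[OF nd]] by simp
  have ht: "\<And>p. p \<le> n + 1 \<Longrightarrow> cnt U (take p (Psi n \<delta>)) - cnt D (take p (Psi n \<delta>)) = (\<Sum>i=1..p. sv (g i))"
    unfolding w by (rule ht_eq)
  have Fp: "\<And>p. 1 \<le> p \<Longrightarrow> p \<le> n \<Longrightarrow> (\<Sum>i=1..p. sv (g i)) =
      1 + int (card ({1..p-1} \<inter> L)) - int (card ({1..p+1} \<inter> R))"
  proof -
    fix p assume p: "1 \<le> p" "p \<le> n"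
    have a: "(\<Sum>i=1..p. sv (g i)) = 1 + (\<Sum>q=1..p-1. ind L q) - (\<Sum>q=1..p+1. ind R q)"
      unfolding g_def using G[OF R1 h1 p] .
    have b: "(\<Sum>q=1..p-1. ind L q) = int (card ({1..p-1} \<inter> L))" by (rule sum_ind) simp
    have c: "(\<Sum>q=1..p+1. ind R q) = int (card ({1..p+1} \<inter> R))" by (rule sum_ind) simp
    show "(\<Sum>i=1..p. sv (g i)) = 1 + int (card ({1..p-1} \<inter> L)) - int (card ({1..p+1} \<inter> R))"
      using a b c by simp
  qed
  have tot: "(\<Sum>i=1..n+1. sv (g i)) = 0"
  proof -
    have "(\<Sum>i=1..n+1. sv (g i)) = int (card ({1..n} \<inter> L)) - int (card ({1..n+1} \<inter> R))"
    proof -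
      have b: "(\<Sum>q=1..n. ind L q) = int (card ({1..n} \<inter> L))" by (rule sum_ind) simp
      have c: "(\<Sum>q=1..n+1. ind R q) = int (card ({1..n+1} \<inter> R))" by (rule sum_ind) simp
      show ?thesis unfolding g_def using Gtot[OF R1 n1 h1] b c by simp
    qed
    moreover have "{1..n} \<inter> L = L" "{1..n+1} \<inter> R = R" using Lsub Rsub by auto
    ultimately show ?thesis using cLR by simp
  qed
  have len: "length (Psi n \<delta>) = n + 1" unfolding w by simp
  have pref: "\<And>p. 1 \<le> p \<Longrightarrow> p \<le> n \<Longrightarrow> card ({1..p+1} \<inter> R) \<le> 1 + card ({1..p-1} \<inter> L)"
  proof -
    fix p assume p: "1 \<le> p" "p \<le> n"
    have sub: "{a\<in>\<delta>. right_end a \<le> p+1} \<subseteq> {a\<in>\<delta>. left_end a \<le> p-1} \<union> {a\<in>\<delta>. left_end a = p}"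
      using ND_arc[OF nd] p by force
    have c1: "card {a\<in>\<delta>. left_end a = p} \<le> 1"
      using ND_injL[OF nd] fin by (auto simp: card_le_Suc0_iff_eq inj_on_def)
    have "card {a\<in>\<delta>. right_end a \<le> p+1} \<le> card ({a\<in>\<delta>. left_end a \<le> p-1} \<union> {a\<in>\<delta>. left_end a = p})"
      using sub fin by (intro card_mono) auto
    also have "\<dots> \<le> card {a\<in>\<delta>. left_end a \<le> p-1} + card {a\<in>\<delta>. left_end a = p}"
      by (rule card_Un_le)
    finally show "card ({1..p+1} \<inter> R) \<le> 1 + card ({1..p-1} \<inter> L)"
      using c1 card_left[OF nd] card_right[OF nd] unfolding L_def R_def by simp
  qed
  have mot: "motzkin (n+1) (Psi n \<delta>)"
    unfolding motzkin_def
  proof (intro conjI allI impI)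
    show "length (Psi n \<delta>) = n + 1" by (rule len)
    show "cnt U (Psi n \<delta>) = cnt D (Psi n \<delta>)"
      using ht[of "n+1"] tot len by simp
    fix p assume "p \<le> length (Psi n \<delta>)"
    then have p: "p \<le> n + 1" using len by simp
    consider "p = 0" | "1 \<le> p" "p \<le> n" | "p = n + 1" using p by linarith
    then show "cnt D (take p (Psi n \<delta>)) \<le> cnt U (take p (Psi n \<delta>))"
    proof cases
      case 1 then show ?thesis by (simp add: cnt_def)
    next
      case 2 then show ?thesis using ht[of p] Fp[of p] pref[of p] by simp
    next
      case 3 then show ?thesis using ht[of p] tot by simp
    qed
  qed
  have nopk: "\<not> has_peak_height 1 (Psi n \<delta>)"
  proof
    assume "has_peak_height 1 (Psi n \<delta>)"
    then obtain p where p: "p + 1 < length (Psi n \<delta>)" "Psi n \<delta> ! p = U" "Psi n \<delta> ! (p+1) = D"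
      "cnt U (take (p+1) (Psi n \<delta>)) - cnt D (take (p+1) (Psi n \<delta>)) = 1"
      unfolding has_peak_height_def by blast
    define i where "i = p + 1"
    have i: "1 \<le> i" "i \<le> n" using p(1) len i_def by auto
    have gi: "g i = U" "g (i+1) = D" using p(2,3) p(1) len unfolding w i_def by (auto simp: nth_w simp del: upt_Suc)
    have iR: "i + 1 \<notin> R" using gi(1) unfolding g_def gstep_def by (auto split: if_splits)
    have iL: "i \<notin> L" using gi(2) unfolding g_def gstep_def by (auto split: if_splits)
    have "(\<Sum>j=1..i. sv (g j)) = 1" using p(4) ht[of i] i unfolding i_def by simp
    then have eq1: "card ({1..i-1} \<inter> L) = card ({1..i+1} \<inter> R)" using Fp[OF i] by simp
    have "{1..i+1} \<inter> R = {1..i} \<inter> R" using iR by (auto simp: le_Suc_eq)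
    then have eq2: "card {a\<in>\<delta>. left_end a \<le> i-1} = card {a\<in>\<delta>. right_end a \<le> i}"
      using eq1 card_left[OF nd] card_right[OF nd] unfolding L_def R_def by simp
    have sub: "{a\<in>\<delta>. right_end a \<le> i} \<subseteq> {a\<in>\<delta>. left_end a \<le> i-1}"
      using ND_arc[OF nd] by force
    have seteq: "{a\<in>\<delta>. right_end a \<le> i} = {a\<in>\<delta>. left_end a \<le> i-1}"
      using card_subset_eq[OF _ sub] eq2 fin by auto
    obtain b where b: "b \<in> \<delta>" "left_end b < i" "i + 1 < right_end b"
      using MAD_h2[OF mad, of i] i iL iR unfolding L_def R_def by auto
    then have "b \<in> {a\<in>\<delta>. left_end a \<le> i-1}" by auto
    then have "right_end b \<le> i" using seteq by blast
    then show False using b by simp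
  qed
  show ?thesis unfolding Mbar_def using mot nopk by simp
qed



lemma uniq_step:
  assumes nd1: "ND N \<delta>1" and nd2: "ND N \<delta>2"
    and LL: "left_end ` \<delta>1 = left_end ` \<delta>2" and RR: "right_end ` \<delta>1 = right_end ` \<delta>2"
    and IH: "\<And>a. right_end a < q \<Longrightarrow> (a \<in> \<delta>1 \<longleftrightarrow> a \<in> \<delta>2)"
    and a1: "a1 \<in> \<delta>1" "right_end a1 = q"
  shows "a1 \<in> \<delta>2"
proof -
  define k1 where "k1 = left_end a1"
  have "q \<in> right_end ` \<delta>2" using a1 RR by force
  then obtain a2 where a2: "a2 \<in> \<delta>2" "right_end a2 = q" by auto
  define k2 where "k2 = left_end a2"
  have e1: "a1 = ao k1 q" using ND_ao[OF nd1 a1(1)] a1(2) k1_def by simp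
  have e2: "a2 = ao k2 q" using ND_ao[OF nd2 a2(1)] a2(2) k2_def by simp
  have k1q: "k1 < q" using ND_arc[OF nd1 a1(1)] a1(2) k1_def by simp
  have k2q: "k2 < q" using ND_arc[OF nd2 a2(1)] a2(2) k2_def by simp
  show ?thesis
  proof (cases "k1 = k2")
    case True then show ?thesis using e1 e2 a2 by simp
  next
    case False
    have "k2 \<in> left_end ` \<delta>1" using a2 LL k2_def by force
    then obtain b where b: "b \<in> \<delta>1" "left_end b = k2" by auto
    define l where "l = right_end b"
    have eb: "b = ao k2 l" using ND_ao[OF nd1 b(1)] b(2) l_def by simp
    have "l \<noteq> q"
    proof
      assume "l = q"
      then have "b = a1" using ND_pair[OF nd1 b(1) a1(1)] a1(2) l_def by auto
      then show False using False b(2) k1_def by simp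
    qed
    moreover have "\<not> l < q"
    proof
      assume "l < q"
      then have "b \<in> \<delta>2" using IH[of b] b(1) l_def by simp
      then have "b = a2" using ND_pair[OF nd2 _ a2(1), of b] b(2) k2_def by auto
      then show False using \<open>l < q\<close> a2(2) l_def by simp
    qed
    ultimately have lq: "q < l" by simp
    have "k1 \<in> left_end ` \<delta>2" using a1 LL k1_def by force
    then obtain c where c: "c \<in> \<delta>2" "left_end c = k1" by auto
    define l' where "l' = right_end c"
    have ec: "c = ao k1 l'" using ND_ao[OF nd2 c(1)] c(2) l'_def by simp
    have "l' \<noteq> q"
    proof
      assume "l' = q"
      then have "c = a2" using ND_pair[OF nd2 c(1) a2(1)] a2(2) l'_def by auto
      then show False using False c(2) k2_def by simp
    qed
    moreover have "\<not> l' < q"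
    proof
      assume "l' < q"
      then have "c \<in> \<delta>1" using IH[of c] c(1) l'_def by simp
      then have "c = a1" using ND_pair[OF nd1 _ a1(1), of c] c(2) k1_def by auto
      then show False using \<open>l' < q\<close> a1(2) l'_def by simp
    qed
    ultimately have lq': "q < l'" by simp
    have nc1: "\<not> arcs_cross a1 b" using ND_pair[OF nd1 a1(1) b(1)] False b(2) k1_def by auto
    have nc2: "\<not> arcs_cross a2 c" using ND_pair[OF nd2 a2(1) c(1)] False c(2) k2_def by auto
    show ?thesis
    proof (cases "k1 < k2")
      case True
      have "\<not> even (k2 + q)" using nc1 C1[OF True k2q lq] e1 eb by simp
      moreover have "\<not> odd (k2 + q)" using nc2 C2[OF True k2q lq'] e2 ec cross_sym[of a2 c] by simp
      ultimately show ?thesis by simp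
    next
      case F2: False
      then have lt: "k2 < k1" using False by simp
      have "\<not> odd (k1 + q)" using nc1 C2[OF lt k1q lq] e1 eb cross_sym[of a1 b] by simp
      moreover have "\<not> even (k1 + q)" using nc2 C1[OF lt k1q lq'] e2 ec by simp
      ultimately show ?thesis by simp
    qed
  qed
qed

lemma uniq:
  assumes nd1: "ND N \<delta>1" and nd2: "ND N \<delta>2"
    and LL: "left_end ` \<delta>1 = left_end ` \<delta>2" and RR: "right_end ` \<delta>1 = right_end ` \<delta>2"
  shows "\<delta>1 = \<delta>2"
proof -
  have "\<forall>a. right_end a = q \<longrightarrow> (a \<in> \<delta>1 \<longleftrightarrow> a \<in> \<delta>2)" for q
  proof (induction q rule: less_induct)
    case (less q)
    have IH: "\<And>a. right_end a < q \<Longrightarrow> (a \<in> \<delta>1 \<longleftrightarrow> a \<in> \<delta>2)" using less by blast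
    have IH': "\<And>a. right_end a < q \<Longrightarrow> (a \<in> \<delta>2 \<longleftrightarrow> a \<in> \<delta>1)" using less by blast
    show ?case
      using uniq_step[OF nd1 nd2 LL RR IH] uniq_step[OF nd2 nd1 LL[symmetric] RR[symmetric] IH'] by blast
  qed
  then show ?thesis by blast
qed

lemma LR_sub:
  assumes m1: "\<delta>1 \<in> MAD n" and m2: "\<delta>2 \<in> MAD n" and eq: "Psi n \<delta>1 = Psi n \<delta>2"
  shows "left_end ` \<delta>1 \<subseteq> left_end ` \<delta>2 \<and> right_end ` \<delta>1 \<subseteq> right_end ` \<delta>2"
proof -
  define L1 where "L1 = left_end ` \<delta>1"
  define R1 where "R1 = right_end ` \<delta>1"
  define L2 where "L2 = left_end ` \<delta>2"
  define R2 where "R2 = right_end ` \<delta>2"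
  have nd1: "ND (n+1) \<delta>1" and nd2: "ND (n+1) \<delta>2" using m1 m2 MAD_iff by blast+
  have g: "\<And>i. 1 \<le> i \<Longrightarrow> i \<le> n + 1 \<Longrightarrow> gstep n L1 R1 i = gstep n L2 R2 i"
  proof -
    fix i assume "1 \<le> i" "i \<le> n + 1"
    then have "i \<in> set [1..<n+2]" by (simp del: upt_Suc)
    then show "gstep n L1 R1 i = gstep n L2 R2 i"
      using eq unfolding Psi_LR L1_def R1_def L2_def R2_def map_eq_conv by blast
  qed
  have h1: "\<And>a. 1 \<le> a \<Longrightarrow> a + 2 \<le> n + 1 \<Longrightarrow> a \<in> L2 \<or> a + 2 \<in> R2"
    using MAD_h1[OF m2] unfolding L2_def R2_def by blast
  have "R1 \<subseteq> R2"
  proof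
    fix x assume x: "x \<in> R1"
    obtain a where a: "a \<in> \<delta>1" "x = right_end a" using x R1_def by auto
    have "2 \<le> x" "x \<le> n + 1" using ND_arc[OF nd1 a(1)] a(2) by auto
    then have "gstep n L1 R1 (x-1) \<noteq> U" using x by (auto simp: gstep_def)
    then have "gstep n L2 R2 (x-1) \<noteq> U" using g[of "x-1"] \<open>2 \<le> x\<close> \<open>x \<le> n+1\<close> by simp
    then show "x \<in> R2" using \<open>2 \<le> x\<close> \<open>x \<le> n+1\<close> by (auto simp: gstep_def split: if_splits)
  qed
  moreover have "L1 \<subseteq> L2"
  proof
    fix x assume x: "x \<in> L1"
    obtain a where a: "a \<in> \<delta>1" "x = left_end a" using x L1_def by auto
    have xb: "1 \<le> x" "x \<le> n" using ND_arc[OF nd1 a(1)] a(2) by auto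
    then have "gstep n L1 R1 (x+1) \<noteq> D" using x by (auto simp: gstep_def)
    then have g2: "gstep n L2 R2 (x+1) \<noteq> D" using g[of "x+1"] xb by simp
    show "x \<in> L2"
    proof (cases "x + 1 \<le> n \<and> x + 2 \<notin> R2")
      case True
      then show ?thesis using h1[of x] xb by auto
    next
      case False
      then show ?thesis using g2 xb by (auto simp: gstep_def split: if_splits)
    qed
  qed
  ultimately show ?thesis unfolding L1_def L2_def R1_def R2_def by blast
qed

lemma B2:
  assumes m1: "\<delta>1 \<in> MAD n" and m2: "\<delta>2 \<in> MAD n" and eq: "Psi n \<delta>1 = Psi n \<delta>2"
  shows "\<delta>1 = \<delta>2"
proof -
  have nd1: "ND (n+1) \<delta>1" and nd2: "ND (n+1) \<delta>2" using m1 m2 MAD_iff by blast+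
  show ?thesis
    using uniq[OF nd1 nd2] LR_sub[OF m1 m2 eq] LR_sub[OF m2 m1 eq[symmetric]] by blast
qed



definition pick :: "nat \<Rightarrow> nat set \<Rightarrow> nat" where
  "pick q S = (if \<exists>y\<in>S. even (y+q) then Max {y\<in>S. even (y+q)} else Min S)"

lemma pick_prop:
  assumes "finite S" "S \<noteq> {}"
  shows "pick q S \<in> S" "\<And>y. y \<in> S \<Longrightarrow> y < pick q S \<Longrightarrow> even (pick q S + q)"
    "\<And>y. y \<in> S \<Longrightarrow> pick q S < y \<Longrightarrow> odd (y + q)"
proof -
  show "pick q S \<in> S"
  proof (cases "\<exists>y\<in>S. even (y+q)")
    case True
    then have "Max {y\<in>S. even (y+q)} \<in> {y\<in>S. even (y+q)}" using assms by (intro Max_in) auto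
    then show ?thesis using True by (simp add: pick_def)
  next
    case False
    then show ?thesis using assms by (simp add: pick_def)
  qed
  fix y assume y: "y \<in> S"
  show "y < pick q S \<Longrightarrow> even (pick q S + q)"
  proof (cases "\<exists>y\<in>S. even (y+q)")
    case True
    then have "Max {y\<in>S. even (y+q)} \<in> {y\<in>S. even (y+q)}" using assms by (intro Max_in) auto
    then show ?thesis using True by (simp add: pick_def)
  next
    case False
    assume "y < pick q S"
    then have "y < Min S" using False by (simp add: pick_def)
    then show ?thesis using Min_le[OF assms(1) y] by simp
  qed
  show "pick q S < y \<Longrightarrow> odd (y + q)"
  proof (cases "\<exists>y\<in>S. even (y+q)")
    case True
    assume lt: "pick q S < y"
    show ?thesis
    proof (rule ccontr)
      assume "\<not> odd (y+q)"
      then have "y \<le> Max {y\<in>S. even (y+q)}" using assms y by (intro Max_ge) auto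
      then show False using lt True by (simp add: pick_def)
    qed
  next
    case False
    then show ?thesis using y by auto
  qed
qed

primrec Sx :: "nat set \<Rightarrow> nat set \<Rightarrow> nat \<Rightarrow> nat set" where
  "Sx L R 0 = {}"
| "Sx L R (Suc p) = (if Suc p \<in> R then Sx L R p - {pick (Suc p) (Sx L R p)} else Sx L R p)
     \<union> (if Suc p \<in> L then {Suc p} else {})"

lemma Sx_sub: "Sx L R p \<subseteq> L \<inter> {1..p}"
  by (induction p) auto

lemma Sx_fin: "finite (Sx L R p)"
  using Sx_sub finite_subset by (metis finite_Int finite_atLeastAtMost)

lemma Sx_mem: "k \<in> Sx L R p \<longleftrightarrow> k \<in> L \<and> 1 \<le> k \<and> k \<le> p \<and>
    \<not> (\<exists>q. k < q \<and> q \<le> p \<and> q \<in> R \<and> pick q (Sx L R (q-1)) = k)"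
proof (induction p)
  case 0 then show ?case by simp
next
  case (Suc p)
  show ?case
  proof (cases "k = Suc p")
    case True
    then have "k \<notin> Sx L R p" using Sx_sub by fastforce
    then show ?thesis using True by auto
  next
    case False
    then show ?thesis using Suc by (auto simp: le_Suc_eq)
  qed
qed

lemma Sx_card:
  assumes "\<And>q. 1 \<le> q \<Longrightarrow> q \<le> p \<Longrightarrow> q \<in> R \<Longrightarrow> Sx L R (q-1) \<noteq> {}"
  shows "card (Sx L R p) + card ({1..p} \<inter> R) = card ({1..p} \<inter> L)"
  using assms
proof (induction p)
  case 0 then show ?case by simp
next
  case (Suc p)
  have pr: "\<And>q. 1 \<le> q \<Longrightarrow> q \<le> p \<Longrightarrow> q \<in> R \<Longrightarrow> Sx L R (q-1) \<noteq> {}"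
    using Suc.prems by simp
  have IH: "card (Sx L R p) + card ({1..p} \<inter> R) = card ({1..p} \<inter> L)" using Suc.IH[OF pr] by blast
  have nin: "Suc p \<notin> Sx L R p" using Sx_sub by fastforce
  define T where "T = (if Suc p \<in> R then Sx L R p - {pick (Suc p) (Sx L R p)} else Sx L R p)"
  have Tsub: "T \<subseteq> Sx L R p" unfolding T_def by auto
  have cT: "card T + (if Suc p \<in> R then 1 else 0) = card (Sx L R p)"
  proof (cases "Suc p \<in> R")
    case True
    have "Sx L R p \<noteq> {}" using Suc.prems[of "Suc p"] True by simp
    then have "pick (Suc p) (Sx L R p) \<in> Sx L R p" by (rule pick_prop(1)[OF Sx_fin])
    moreover have "card (Sx L R p) > 0" using \<open>Sx L R p \<noteq> {}\<close> Sx_fin[of L R p] by (simp add: card_gt_0_iff)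
    ultimately have "card (Sx L R p - {pick (Suc p) (Sx L R p)}) + 1 = card (Sx L R p)"
      using card_Diff_singleton[of "pick (Suc p) (Sx L R p)" "Sx L R p"] by linarith
    then show ?thesis unfolding T_def using True by simp
  next
    case False then show ?thesis unfolding T_def by simp
  qed
  have S1: "Sx L R (Suc p) = T \<union> (if Suc p \<in> L then {Suc p} else {})" unfolding T_def by simp
  have cS: "card (Sx L R (Suc p)) = card T + (if Suc p \<in> L then 1 else 0)"
  proof (cases "Suc p \<in> L")
    case True
    have "Suc p \<notin> T" using nin Tsub by blast
    moreover have "finite T" using finite_subset[OF Tsub Sx_fin] .
    ultimately show ?thesis unfolding S1 using True by simp
  next
    case False then show ?thesis unfolding S1 by simp
  qed
  have eR: "{1..Suc p} \<inter> R = ({1..p} \<inter> R) \<union> (if Suc p \<in> R then {Suc p} else {})" by (auto simp: le_Suc_eq)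
  have eL: "{1..Suc p} \<inter> L = ({1..p} \<inter> L) \<union> (if Suc p \<in> L then {Suc p} else {})" by (auto simp: le_Suc_eq)
  have cR: "card ({1..Suc p} \<inter> R) = card ({1..p} \<inter> R) + (if Suc p \<in> R then 1 else 0)"
    unfolding eR by (cases "Suc p \<in> R") simp_all
  have cL: "card ({1..Suc p} \<inter> L) = card ({1..p} \<inter> L) + (if Suc p \<in> L then 1 else 0)"
    unfolding eL by (cases "Suc p \<in> L") simp_all
  show ?case using IH cT cS cR cL by simp
qed



lemma card_Suc_int: "card ({1..Suc m} \<inter> A) = card ({1..m} \<inter> A) + (if Suc m \<in> A then 1 else 0)"
proof -
  have e: "{1..Suc m} \<inter> A = ({1..m} \<inter> A) \<union> (if Suc m \<in> A then {Suc m} else {})" by (auto simp: le_Suc_eq)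
  show ?thesis unfolding e by (cases "Suc m \<in> A") simp_all
qed

locale cons =
  fixes n :: nat and w :: "step list"
  assumes n1: "1 \<le> n" and wM: "w \<in> Mbar (n+1)"
begin

definition f :: "nat \<Rightarrow> step" where "f i = w ! (i - 1)"
definition L :: "nat set" where "L = {x. 1 \<le> x \<and> x \<le> n \<and> f (x+1) \<noteq> D}"
definition R :: "nat set" where "R = {x. 2 \<le> x \<and> x \<le> n+1 \<and> f (x-1) \<noteq> U}"
definition hs :: "nat \<Rightarrow> int" where "hs p = (\<Sum>i=1..p. sv (f i))"

lemma len: "length w = n + 1"
  using wM unfolding Mbar_def motzkin_def by simp

lemma wmap: "w = map f [1..<n+2]"
proof (rule nth_equalityI)
  show "length w = length (map f [1..<n+2])" using len by simp
  fix q assume "q < length w"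
  then have "q < n + 1" using len by simp
  then show "w ! q = map f [1..<n+2] ! q" using nth_w[of q n f] by (simp add: f_def)
qed

lemma hs_cnt: "p \<le> n + 1 \<Longrightarrow> cnt U (take p w) - cnt D (take p w) = hs p"
  unfolding hs_def using ht_eq[of p n f] wmap by metis

lemma hs_nonneg: "p \<le> n + 1 \<Longrightarrow> hs p \<ge> 0"
  using hs_cnt[of p] wM len unfolding Mbar_def motzkin_def by force

lemma hs_tot: "hs (n+1) = 0"
proof -
  have "take (n+1) w = w" using len by simp
  then show ?thesis using hs_cnt[of "n+1"] wM unfolding Mbar_def motzkin_def by simp
qed

lemma hs_Suc: "hs (Suc p) = hs p + sv (f (Suc p))"
  unfolding hs_def by simp

lemma f1: "f 1 \<noteq> D"
  using hs_nonneg[of 1] n1 unfolding hs_def by auto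

lemma fN: "f (n+1) \<noteq> U"
  using hs_nonneg[of n] hs_tot hs_Suc[of n] by auto

lemma nopk:
  assumes "1 \<le> i" "i \<le> n" "f i = U" "f (i+1) = D"
  shows "hs i \<ge> 2"
proof -
  have np: "\<not> has_peak_height 1 w" using wM unfolding Mbar_def by simp
  have a: "w ! (i-1) = U" using assms(3) unfolding f_def .
  have b: "w ! (i-1+1) = D" using assms(1,4) unfolding f_def by simp
  have c: "i - 1 + 1 < length w" using assms(1,2) len by simp
  have "hs i \<noteq> 1"
  proof
    assume "hs i = 1"
    then have "cnt U (take (i-1+1) w) - cnt D (take (i-1+1) w) = 1"
      using hs_cnt[of i] assms by simp
    then show False using np a b c unfolding has_peak_height_def by blast
  qed
  moreover have "hs i = hs (i-1) + 1"
    using hs_Suc[of "i-1"] assms(1,3) by simp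
  moreover have "hs (i-1) \<ge> 0" using hs_nonneg[of "i-1"] assms by simp
  ultimately show ?thesis by simp
qed

lemma gs: "1 \<le> i \<Longrightarrow> i \<le> n + 1 \<Longrightarrow> gstep n L R i = f i"
  using f1 fN n1 unfolding gstep_def L_def R_def
  by (cases "i = 1"; cases "f i") (auto simp: le_Suc_eq)

lemma wpsi: "map (gstep n L R) [1..<n+2] = w"
  unfolding wmap[symmetric] by (subst wmap) (auto simp: gs simp del: upt_Suc)

lemma h1: "1 \<le> a \<Longrightarrow> a + 2 \<le> n + 1 \<Longrightarrow> a \<in> L \<or> a + 2 \<in> R"
  unfolding L_def R_def by auto

lemma R1: "1 \<notin> R" unfolding R_def by simp

lemma Lsub: "L \<subseteq> {1..n}" unfolding L_def by auto
lemma Rsub: "R \<subseteq> {1..n+1}" unfolding R_def by auto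

lemma hs_gs: "p \<le> n + 1 \<Longrightarrow> hs p = (\<Sum>i=1..p. sv (gstep n L R i))"
  unfolding hs_def by (rule sum.cong) (auto simp: gs)

lemma Fp: "1 \<le> p \<Longrightarrow> p \<le> n \<Longrightarrow>
   hs p = 1 + int (card ({1..p-1} \<inter> L)) - int (card ({1..p+1} \<inter> R))"
proof -
  assume p: "1 \<le> p" "p \<le> n"
  have a: "hs p = 1 + (\<Sum>q=1..p-1. ind L q) - (\<Sum>q=1..p+1. ind R q)"
    using hs_gs[of p] G[OF R1 h1 p] p by simp
  have b: "(\<Sum>q=1..p-1. ind L q) = int (card ({1..p-1} \<inter> L))" by (rule sum_ind) simp
  have c: "(\<Sum>q=1..p+1. ind R q) = int (card ({1..p+1} \<inter> R))" by (rule sum_ind) simp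
  show ?thesis using a b c by simp
qed

lemma cardLR: "card L = card R"
proof -
  have a: "hs (n+1) = (\<Sum>q=1..n. ind L q) - (\<Sum>q=1..n+1. ind R q)"
    using hs_gs[of "n+1"] Gtot[OF R1 n1 h1] by simp
  have b: "(\<Sum>q=1..n. ind L q) = int (card ({1..n} \<inter> L))" by (rule sum_ind) simp
  have c: "(\<Sum>q=1..n+1. ind R q) = int (card ({1..n+1} \<inter> R))" by (rule sum_ind) simp
  have "{1..n} \<inter> L = L" "{1..n+1} \<inter> R = R" using Lsub Rsub by auto
  then show ?thesis using a b c hs_tot by simp
qed

abbreviation S where "S p \<equiv> Sx L R p"

lemma nonempty: "q \<in> R \<Longrightarrow> S (q-1) \<noteq> {}"
proof (induction q rule: less_induct)
  case (less q)
  have qb: "2 \<le> q" "q \<le> n + 1" using less.prems R_def by auto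
  have cS: "card (S (q-1)) + card ({1..q-1} \<inter> R) = card ({1..q-1} \<inter> L)"
    by (rule Sx_card) (use less.IH qb in auto)
  have cq: "card ({1..q} \<inter> R) = card ({1..q-1} \<inter> R) + 1"
    using card_Suc_int[of "q-1" R] less.prems qb by simp
  have "card (S (q-1)) \<ge> 1"
  proof (cases "q \<le> n")
    case True
    have F: "hs q = 1 + int (card ({1..q-1} \<inter> L)) - int (card ({1..q+1} \<inter> R))"
      using Fp[of q] True qb by simp
    have cq1: "card ({1..q+1} \<inter> R) = card ({1..q} \<inter> R) + (if q + 1 \<in> R then 1 else 0)"
      using card_Suc_int[of q R] by simp
    show ?thesis
    proof (cases "q + 1 \<in> R")
      case True
      then show ?thesis using F cq1 cq cS hs_nonneg[of q] qb by simp
    next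
      case False
      then have "f q = U" using True qb unfolding R_def by auto
      then have "hs q = hs (q-1) + 1" using hs_Suc[of "q-1"] qb by simp
      moreover have "hs (q-1) \<ge> 0" using hs_nonneg[of "q-1"] qb by simp
      ultimately show ?thesis using F cq1 cq cS False by simp
    qed
  next
    case False
    then have qn: "q = n + 1" using qb by simp
    have "{1..n} \<inter> L = L" "{1..n+1} \<inter> R = R" using Lsub Rsub by auto
    then show ?thesis using cS cq cardLR qn by simp
  qed
  then show ?case by auto
qed

lemma Scard: "card (S p) + card ({1..p} \<inter> R) = card ({1..p} \<inter> L)"
  by (rule Sx_card) (use nonempty in auto)

lemma S_final: "S (n+1) = {}"
proof -
  have "{1..n+1} \<inter> L = L" "{1..n+1} \<inter> R = R" using Lsub Rsub by auto
  then have "card (S (n+1)) = 0" using Scard[of "n+1"] cardLR by simp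
  then show ?thesis using Sx_fin by simp
qed

definition pk :: "nat \<Rightarrow> nat" where "pk q = pick q (S (q-1))"

lemma pk_in: "q \<in> R \<Longrightarrow> pk q \<in> S (q-1)"
  unfolding pk_def by (rule pick_prop(1)[OF Sx_fin nonempty])

lemma pk_props: "q \<in> R \<Longrightarrow> pk q \<in> L \<and> 1 \<le> pk q \<and> pk q < q"
  using pk_in[of q] Sx_mem[of "pk q" L R "q-1"] R_def by auto

lemma pk_inj: assumes "q1 \<in> R" "q2 \<in> R" "pk q1 = pk q2" shows "q1 = q2"
proof -
  have *: False if "a \<in> R" "b \<in> R" "pk a = pk b" "a < b" for a b
  proof -
    have "pk b \<in> S (b-1)" using pk_in that by simp
    then have "\<not> (\<exists>q. pk b < q \<and> q \<le> b - 1 \<and> q \<in> R \<and> pick q (S (q-1)) = pk b)"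
      using Sx_mem by blast
    moreover have "pk b < a" using pk_props[of a] that by simp
    ultimately show False using that unfolding pk_def by auto
  qed
  show ?thesis using *[of q1 q2] *[of q2 q1] assms by (cases "q1 < q2"; cases "q2 < q1") auto
qed

lemma pk_surj: assumes "k \<in> L" shows "\<exists>q. q \<in> R \<and> pk q = k \<and> k < q"
proof -
  have "k \<notin> S (n+1)" using S_final by simp
  moreover have "1 \<le> k" "k \<le> n + 1" using assms Lsub by auto
  ultimately show ?thesis using Sx_mem[of k L R "n+1"] assms unfolding pk_def by blast
qed

lemma pk_later: assumes "k \<in> S p" "q \<in> R" "pk q = k" shows "p < q"
proof (rule ccontr)
  assume "\<not> p < q"
  moreover have "k < q" using pk_props[OF assms(2)] assms(3) by simp
  ultimately show False using Sx_mem[of k L R p] assms unfolding pk_def by auto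
qed

definition dl :: "arc set" where "dl = (\<lambda>q. ao (pk q) q) ` R"

lemma dl_L: "left_end ` dl = L"
  unfolding dl_def image_image using pk_props pk_surj by force

lemma dl_R: "right_end ` dl = R"
  unfolding dl_def image_image by simp

lemma ncross:
  assumes q: "q1 \<in> R" "q2 \<in> R" "q1 < q2"
  shows "\<not> arcs_cross (ao (pk q1) q1) (ao (pk q2) q2)"
proof -
  define k1 where "k1 = pk q1"
  define k2 where "k2 = pk q2"
  have k1q: "k1 < q1" using pk_props[OF q(1)] k1_def by simp
  have k2q: "k2 < q2" using pk_props[OF q(2)] k2_def by simp
  show ?thesis
  proof (cases "q1 \<le> k2")
    case True
    then show ?thesis using C3[OF k1q True k2q] k1_def k2_def by simp
  next
    case False
    then have k2q1: "k2 < q1" by simp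
    have k2S: "k2 \<in> S (q1-1)"
    proof -
      have "k2 \<in> L" "1 \<le> k2" using pk_props[OF q(2)] k2_def by auto
      moreover have "\<not> (\<exists>q. k2 < q \<and> q \<le> q1 - 1 \<and> q \<in> R \<and> pick q (S (q-1)) = k2)"
      proof
        assume "\<exists>q. k2 < q \<and> q \<le> q1 - 1 \<and> q \<in> R \<and> pick q (S (q-1)) = k2"
        then obtain q where "q \<le> q1 - 1" "q \<in> R" "pk q = pk q2" unfolding pk_def k2_def by blast
        then show False using pk_inj[of q q2] q by auto
      qed
      ultimately show ?thesis using Sx_mem[of k2 L R "q1-1"] k2q1 by auto
    qed
    have ne: "k1 \<noteq> k2" using pk_inj[OF q(1) q(2)] q(3) k1_def k2_def by auto
    have fS: "finite (S (q1-1))" "S (q1-1) \<noteq> {}" using Sx_fin nonempty[OF q(1)] by auto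
    have k1e: "k1 = pick q1 (S (q1-1))" using k1_def pk_def by simp
    show ?thesis
    proof (cases "k1 < k2")
      case True
      have "odd (k2 + q1)" using pick_prop(3)[OF fS k2S, of q1] True k1e by simp
      then show ?thesis using C1[OF True k2q1 q(3)] k1_def k2_def by simp
    next
      case F: False
      then have lt: "k2 < k1" using ne by simp
      have "even (k1 + q1)" using pick_prop(2)[OF fS k2S, of q1] lt k1e by simp
      then have "\<not> arcs_cross (ao k2 q2) (ao k1 q1)" using C2[OF lt k1q q(3)] by simp
      then show ?thesis using cross_sym k1_def k2_def by blast
    qed
  qed
qed

lemma dl_ND: "ND (n+1) dl"
  unfolding ND_def noncrossing_diagram_def
proof (intro conjI ballI impI)
  fix a assume "a \<in> dl"
  then obtain q where q: "q \<in> R" "a = ao (pk q) q" unfolding dl_def by auto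
  then show "is_arc (n + 1) a" using pk_props[OF q(1)] Rsub by auto
  show "sortable a" using q by simp
next
  fix a b assume a: "a \<in> dl" and b: "b \<in> dl" and ab: "a \<noteq> b"
  obtain q1 where q1: "q1 \<in> R" "a = ao (pk q1) q1" using a unfolding dl_def by auto
  obtain q2 where q2: "q2 \<in> R" "b = ao (pk q2) q2" using b unfolding dl_def by auto
  have ne: "q1 \<noteq> q2" using ab q1 q2 by auto
  show "left_end a \<noteq> left_end b" using pk_inj[OF q1(1) q2(1)] ne q1 q2 by auto
  show "right_end a \<noteq> right_end b" using ne q1 q2 by auto
  show "\<not> arcs_cross a b"
  proof (cases "q1 < q2")
    case True then show ?thesis using ncross[OF q1(1) q2(1) True] q1 q2 by simp
  next
    case False
    then have "q2 < q1" using ne by simp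
    then show ?thesis using ncross[OF q2(1) q1(1)] q1 q2 cross_sym by blast
  qed
qed

lemma dl_h2:
  assumes a: "1 \<le> a" "a + 1 \<le> n + 1"
  shows "a \<in> left_end ` dl \<or> a + 1 \<in> right_end ` dl \<or> (\<exists>b\<in>dl. left_end b < a \<and> a + 1 < right_end b)"
proof (cases "a \<in> L \<or> a + 1 \<in> R")
  case True then show ?thesis using dl_L dl_R by auto
next
  case False
  then have aL: "a \<notin> L" and aR: "a + 1 \<notin> R" by auto
  have fa: "f a = U" using aR a unfolding R_def by auto
  have fa1: "f (a+1) = D" using aL a unfolding L_def by auto
  have h: "hs a \<ge> 2" using nopk[OF a(1) _ fa fa1] a by simp
  have F: "hs a = 1 + int (card ({1..a-1} \<inter> L)) - int (card ({1..a+1} \<inter> R))"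
    using Fp[of a] a by simp
  have c1: "card ({1..a} \<inter> L) = card ({1..a-1} \<inter> L)"
    using card_Suc_int[of "a-1" L] aL a by simp
  have c2: "card ({1..a+1} \<inter> R) = card ({1..a} \<inter> R)"
    using card_Suc_int[of a R] aR by simp
  have "card (S a) \<ge> 1" using Scard[of a] F c1 c2 h by simp
  then obtain k where k: "k \<in> S a" by (metis card.empty ex_in_conv not_one_le_zero)
  have kL: "k \<in> L" "k \<le> a" using Sx_mem[of k L R a] k by auto
  then have ka: "k < a" using aL by (cases "k = a") auto
  obtain q where q: "q \<in> R" "pk q = k" using pk_surj[OF kL(1)] by blast
  have "a < q" using pk_later[OF k q] .
  then have "a + 1 < q" using aR q(1) by (cases "q = a + 1") auto
  moreover have "ao (pk q) q \<in> dl" using q(1) unfolding dl_def by auto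
  ultimately show ?thesis using ka q(2) by force
qed

lemma dl_MAD: "dl \<in> MAD n"
proof (rule MAD_suff[OF dl_ND])
  fix a assume "1 \<le> a" "a + 2 \<le> n + 1"
  then show "a \<in> left_end ` dl \<or> a + 2 \<in> right_end ` dl" using h1 dl_L dl_R by simp
next
  fix a assume "1 \<le> a" "a + 1 \<le> n + 1"
  then show "a \<in> left_end ` dl \<or> a + 1 \<in> right_end ` dl \<or> (\<exists>b\<in>dl. left_end b < a \<and> a + 1 < right_end b)"
    by (rule dl_h2)
qed

lemma dl_Psi: "Psi n dl = w"
  unfolding Psi_LR dl_L dl_R by (rule wpsi)

end


theorem theorem8p10:
  fixes n :: nat
  assumes "1 \<le> n"
  shows "bij_betw (Psi n) (MAD n) (Mbar (n+1))"
  unfolding bij_betw_def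
proof (intro conjI)
  show "inj_on (Psi n) (MAD n)" unfolding inj_on_def using B2 by blast
  show "Psi n ` MAD n = Mbar (n + 1)"
  proof
    show "Psi n ` MAD n \<subseteq> Mbar (n + 1)" using B1 assms by blast
    show "Mbar (n + 1) \<subseteq> Psi n ` MAD n"
    proof
      fix w assume w: "w \<in> Mbar (n + 1)"
      interpret c: cons n w using assms w by unfold_locales
      show "w \<in> Psi n ` MAD n" using c.dl_MAD c.dl_Psi by (metis image_eqI)
    qed
  qed
qed

end
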